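(* Let $G$ be a finite abelian group and let $\rho\ge4$ be an integer. Then $s_\rho(G)\le\frac{2}{\rho+1}|G|$, with equality if and only if $G$ has a subgroup $H$ such that $G/H$ is cyclic of order $\rho+1$. Moreover, for a subset $A\subseteq G$ the following are equivalent: (i) $A$ is a generating set for $G$ with $\operatorname{diam}^+_A(G)\ge\rho$ and $|A|=\frac{2}{\rho+1}|G|$; (ii) $A=H\cup(g+H)$, where $H$ is a subgroup of $G$ such that $G/H$ is cyclic of order $\rho+1$, and $g\in G$ is such that $g+H$ generates $G/H$.
   Context: Groups are written additively. For $A\subseteq G$ let $A_0:=A\cup\{0\}$ and $\langle A\rangle^+_\rho:=\rho A_0=\{a_1+\dots+a_\rho:a_i\in A_0\}$. $\operatorname{diam}^+_A(G):=\min\{\rho\in\mathbb{N}_0:\langle A\rangle^+_\rho=G\}$ ($\min\varnothing=\infty$). With the convention $\max\varnothing=0$: $s_\rho(G):=\max\{|A|: A\subseteq G,\ \rho\le\operatorname{diam}^+_A(G)<\infty\}$. *)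

theory Defs
  imports "HOL-Algebra.Elementary_Groups" "HOL-Library.Extended_Nat"
begin

text \<open>Groups are HOL-Algebra structures (written multiplicatively; the paper writes them
additively). sumset G A r is the r-fold product set of A_0 = A \<union> {1}, i.e.
the paper's r A_0 (with 0 A_0 = {1}).\<close>

fun sumset :: "('a, 'b) monoid_scheme \<Rightarrow> 'a set \<Rightarrow> nat \<Rightarrow> 'a set" where
  "sumset G A 0 = {\<one>\<^bsub>G\<^esub>}"
| "sumset G A (Suc n) = sumset G A n <#>\<^bsub>G\<^esub> (A \<union> {\<one>\<^bsub>G\<^esub>})"

definition diam :: "('a, 'b) monoid_scheme \<Rightarrow> 'a set \<Rightarrow> enat" where
  "diam G A = (if (\<exists>r. sumset G A r = carrier G)
               then enat (LEAST r. sumset G A r = carrier G) else \<infinity>)"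

definition s_rho :: "('a, 'b) monoid_scheme \<Rightarrow> nat \<Rightarrow> nat" where
  "s_rho G r = Max ({card A | A. A \<subseteq> carrier G \<and> enat r \<le> diam G A \<and> diam G A < \<infinity>} \<union> {0})"

end

theory Submission
  imports Defs "HOL-Algebra.Multiplicative_Group"
begin


context comm_group
begin

lemma rcoset_image: "X #> g = (\<lambda>y. y \<otimes> g) ` X"
  by (auto simp: r_coset_def)

lemma card_rcoset:
  assumes "X \<subseteq> carrier G" "g \<in> carrier G"
  shows "card (X #> g) = card X"
  unfolding rcoset_image by (rule card_image) (use assms inj_on_g in auto)

lemma set_mult_rcoset:
  assumes "X \<subseteq> carrier G" "B \<subseteq> carrier G" "g \<in> carrier G"
  shows "(X #> g) <#> B = (X <#> B) #> g"
proof -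
  have "x \<otimes> g \<otimes> b = x \<otimes> b \<otimes> g" if "x \<in> X" "b \<in> B" for x b
    using that assms by (metis m_assoc m_comm subsetD)
  then show ?thesis
    unfolding r_coset_def set_mult_def by (auto; metis)
qed

lemma one_set_mult:
  assumes "B \<subseteq> carrier G" shows "{\<one>} <#> B = B"
  using assms unfolding set_mult_def by force

lemma set_mult_sup:
  assumes "X \<subseteq> carrier G" "\<one> \<in> B" shows "X \<subseteq> X <#> B"
proof
  fix x assume "x \<in> X"
  then have "x = x \<otimes> \<one>" using assms by auto
  then show "x \<in> X <#> B" using \<open>x \<in> X\<close> assms unfolding set_mult_def by blast
qed


lemma card_le_carrier:
  assumes "finite (carrier G)" "Y \<subseteq> carrier G" "Y \<noteq> carrier G"
  shows "card Y < card (carrier G)"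
  using assms by (meson psubsetI psubset_card_mono)

lemma atom_subgroup:
  assumes fin: "finite (carrier G)" and Bc: "B \<subseteq> carrier G" and B1: "\<one> \<in> B"
    and Bne: "B \<noteq> carrier G"
  shows "\<exists>H. subgroup H G \<and> H <#> B \<noteq> carrier G \<and>
    (\<forall>X. X \<subseteq> carrier G \<longrightarrow> X \<noteq> {} \<longrightarrow> X <#> B \<noteq> carrier G \<longrightarrow>
        card X + (card (H <#> B) - card H) \<le> card (X <#> B))"
proof -
  define n where "n = card (carrier G)"
  define F where "F = {X. X \<subseteq> carrier G \<and> X \<noteq> {} \<and> X <#> B \<noteq> carrier G}"
  define v where "v X = card (X <#> B) - card X" for X
  have finF: "finite F" unfolding F_def
    by (rule finite_subset[of _ "Pow (carrier G)"]) (use fin in auto)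
  have oneF: "{\<one>} \<in> F" unfolding F_def using one_set_mult[OF Bc] Bne by auto
  define k where "k = Min (v ` F)"
  have kle: "k \<le> v X" if "X \<in> F" for X
    unfolding k_def using finF that by auto
  have XBc: "X <#> B \<subseteq> carrier G" if "X \<subseteq> carrier G" for X
    using set_mult_closed[OF that Bc] .
  have finX: "finite X" if "X \<subseteq> carrier G" for X
    using that fin finite_subset by blast
  have cardle: "card X \<le> card (X <#> B)" if "X \<subseteq> carrier G" for X
    by (rule card_mono) (use that XBc finX set_mult_sup B1 in auto)
  have low: "card X + k \<le> card (X <#> B)" if "X \<in> F" for X
    using kle[OF that] cardle[of X] that unfolding F_def v_def by auto
  define KF where "KF = {X \<in> F. v X = k}"
  have "k \<in> v ` F" unfolding k_def using finF oneF by (intro Min_in) auto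
  then have KFne: "KF \<noteq> {}" unfolding KF_def by auto
  have finKF: "finite KF" using finF unfolding KF_def by auto
  define a where "a = Min (card ` KF)"
  have "a \<in> card ` KF" unfolding a_def using finKF KFne by (intro Min_in) auto
  then obtain A0 where A0: "A0 \<in> KF" "card A0 = a" by auto
  have amin: "a \<le> card X" if "X \<in> KF" for X
    unfolding a_def using finKF that by auto
  have KF_card: "card (X <#> B) = card X + k" if "X \<in> KF" for X
    using that cardle[of X] unfolding KF_def F_def v_def by auto
  have trans: "X #> g \<in> KF \<and> card (X #> g) = card X" if "X \<in> KF" "g \<in> carrier G" for X g
  proof -
    have Xc: "X \<subseteq> carrier G" "X \<noteq> {}" "X <#> B \<noteq> carrier G"
      using that unfolding KF_def F_def by auto
    have c1: "card (X #> g) = card X" using card_rcoset Xc that by auto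
    have eq: "(X #> g) <#> B = (X <#> B) #> g" using set_mult_rcoset Xc Bc that by auto
    have c2: "card ((X #> g) <#> B) = card (X <#> B)" unfolding eq
      using card_rcoset XBc Xc that by auto
    have sub: "X #> g \<subseteq> carrier G" using r_coset_subset_G Xc that by auto
    have ne: "X #> g \<noteq> {}" using Xc unfolding r_coset_def by auto
    have "card (X <#> B) < n" unfolding n_def using card_le_carrier fin XBc Xc by auto
    then have "(X #> g) <#> B \<noteq> carrier G" using c2 n_def by auto
    then have "X #> g \<in> F" using sub ne unfolding F_def by auto
    then show ?thesis using c1 c2 that unfolding KF_def v_def by auto
  qed
  have compl: "card X + card (X <#> B) \<le> n" if "X \<in> KF" "card X = a" for X
  proof -
    have Xc: "X \<subseteq> carrier G" "X \<noteq> {}" "X <#> B \<noteq> carrier G"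
      using that unfolding KF_def F_def by auto
    define Y where "Y = m_inv G ` (carrier G - (X <#> B))"
    have injinv: "inj_on (m_inv G) (carrier G)" by (rule inv_inj)
    have Yc: "Y \<subseteq> carrier G" unfolding Y_def using inv_closed by blast
    have "carrier G - (X <#> B) \<noteq> {}" using XBc[OF Xc(1)] Xc(3) by auto
    then have Yne: "Y \<noteq> {}" unfolding Y_def by auto
    have "card Y = card (carrier G - (X <#> B))" unfolding Y_def
      by (rule card_image[OF inj_on_subset[OF injinv]]) blast
    also have "\<dots> = n - card (X <#> B)" unfolding n_def
      by (rule card_Diff_subset[OF finX[OF XBc[OF Xc(1)]] XBc[OF Xc(1)]])
    finally have cY: "card Y = n - card (X <#> B)" .
    have YB: "Y <#> B \<subseteq> carrier G - m_inv G ` X"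
    proof
      fix w assume "w \<in> Y <#> B"
      then obtain y b where yb: "y \<in> Y" "b \<in> B" "w = y \<otimes> b"
        unfolding set_mult_def by blast
      from yb(1) obtain z where z: "z \<in> carrier G - (X <#> B)" "y = inv z"
        unfolding Y_def by blast
      have zb: "z \<in> carrier G" "z \<notin> X <#> B" "b \<in> B" "w = inv z \<otimes> b"
        using z yb by auto
      have bc: "b \<in> carrier G" using zb Bc by auto
      have wc: "w \<in> carrier G" using zb bc by auto
      have "w \<notin> m_inv G ` X"
      proof
        assume "w \<in> m_inv G ` X"
        then obtain x where x: "x \<in> X" "w = inv x" by auto
        have xc: "x \<in> carrier G" using x Xc by auto
        have "z = x \<otimes> b"
        proof -
          have e: "inv z \<otimes> b = inv x" using zb(4) x(2) by simp
          have "(x \<otimes> b) \<otimes> inv z = x \<otimes> (inv z \<otimes> b)"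
            using bc xc zb by (simp add: m_assoc m_comm[of b "inv z"])
          also have "\<dots> = \<one>" using e xc by simp
          finally have eq1: "(x \<otimes> b) \<otimes> inv z = \<one>" .
          have "inv (inv z) = x \<otimes> b" by (rule inv_equality[OF eq1]) (use bc xc zb in auto)
          then show ?thesis using zb by simp
        qed
        then have "z \<in> X <#> B" using x zb unfolding set_mult_def by auto
        then show False using zb by auto
      qed
      then show "w \<in> carrier G - m_inv G ` X" using wc by auto
    qed
    have cX: "card (m_inv G ` X) = card X" using card_image[OF inj_on_subset[OF injinv Xc(1)]] .
    have cYB: "card (Y <#> B) \<le> n - card X"
    proof -
      have "card (Y <#> B) \<le> card (carrier G - m_inv G ` X)"
        by (rule card_mono) (use YB fin in auto)
      also have "\<dots> = n - card X" unfolding n_def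
        using card_Diff_subset[of "m_inv G ` X" "carrier G"] cX finX Xc by auto
      finally show ?thesis .
    qed
    have "m_inv G ` X \<noteq> {}" using Xc by auto
    then obtain x0 where "x0 \<in> X" by auto
    then have "inv x0 \<in> carrier G" "inv x0 \<notin> Y <#> B" using YB Xc(1) by auto
    then have "Y <#> B \<noteq> carrier G" by auto
    then have YF: "Y \<in> F" unfolding F_def using Yc Yne by auto
    have "card X \<le> card (X <#> B)" using cardle Xc by auto
    have "card (X <#> B) \<le> n" unfolding n_def using card_mono[OF fin XBc[OF Xc(1)]] .
    have "v Y \<le> k" using cY cYB KF_card[OF that(1)] \<open>card (X <#> B) \<le> n\<close> unfolding v_def by auto
    then have "Y \<in> KF" using kle[OF YF] YF unfolding KF_def by auto
    then have "a \<le> card Y" by (rule amin)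
    then show ?thesis using cY that \<open>card (X <#> B) \<le> n\<close> by auto
  qed
  have inter: "X = Y" if "X \<in> KF" "Y \<in> KF" "card X = a" "card Y = a" "X \<inter> Y \<noteq> {}" for X Y
  proof (rule ccontr)
    assume "X \<noteq> Y"
    have Xc: "X \<subseteq> carrier G" "X \<noteq> {}" "X <#> B \<noteq> carrier G"
      using that unfolding KF_def F_def by auto
    have Yc: "Y \<subseteq> carrier G" "Y \<noteq> {}" "Y <#> B \<noteq> carrier G"
      using that unfolding KF_def F_def by auto
    have "\<not> X \<subseteq> Y"
    proof
      assume "X \<subseteq> Y"
      then have "X = Y" using card_subset_eq[OF finX[OF Yc(1)]] that by auto
      then show False using \<open>X \<noteq> Y\<close> by auto
    qed
    then have "X \<inter> Y \<subset> X" by auto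
    then have cI: "card (X \<inter> Y) < a" using psubset_card_mono[OF finX[OF Xc(1)]] that by auto
    have s1: "(X \<inter> Y) <#> B \<subseteq> (X <#> B) \<inter> (Y <#> B)" unfolding set_mult_def by auto
    have s2: "(X \<union> Y) <#> B = (X <#> B) \<union> (Y <#> B)" unfolding set_mult_def by auto
    have fXB: "finite (X <#> B)" "finite (Y <#> B)" using finX XBc Xc Yc by auto
    have cUI: "card ((X <#> B) \<union> (Y <#> B)) + card ((X <#> B) \<inter> (Y <#> B)) = 2 * a + 2 * k"
      using card_Un_Int[OF fXB] KF_card that by auto
    have c1: "card ((X \<inter> Y) <#> B) \<le> card ((X <#> B) \<inter> (Y <#> B))"
      by (rule card_mono) (use s1 fXB in auto)
    have IF: "X \<inter> Y \<in> F"
    proof -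
      have "(X \<inter> Y) <#> B \<subseteq> X <#> B" using s1 by auto
      then have "(X \<inter> Y) <#> B \<noteq> carrier G" using XBc[OF Xc(1)] Xc(3) by auto
      then show ?thesis unfolding F_def using Xc that(5) by auto
    qed
    have lowI: "card (X \<inter> Y) + k \<le> card ((X \<inter> Y) <#> B)" using low[OF IF] .
    have cXY: "card (X \<inter> Y) + card (X \<union> Y) = 2 * a"
      using card_Un_Int[OF finX[OF Xc(1)] finX[OF Yc(1)]] that by auto
    show False
    proof (cases "(X \<union> Y) <#> B = carrier G")
      case True
      then have "card ((X <#> B) \<union> (Y <#> B)) = n" using s2 n_def by auto
      moreover have "a + (a + k) \<le> n" using compl[OF that(1) that(3)] KF_card[OF that(1)] that(3) by auto
      moreover have "card (X \<inter> Y) \<ge> 1" proof -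
        have "finite (X \<inter> Y)" using finX[OF Xc(1)] by auto
        then have "card (X \<inter> Y) > 0" using that(5) by (simp add: card_gt_0_iff)
        then show ?thesis by simp
      qed
      ultimately show False using cUI c1 lowI by auto
    next
      case False
      then have UF: "X \<union> Y \<in> F" unfolding F_def using Xc Yc by auto
      have lowU: "card (X \<union> Y) + k \<le> card ((X \<union> Y) <#> B)" using low[OF UF] .
      have "card ((X \<inter> Y) <#> B) \<le> card (X \<inter> Y) + k"
        using cUI c1 lowU cXY s2 by auto
      then have "v (X \<inter> Y) = k" using lowI unfolding v_def by auto
      then have "X \<inter> Y \<in> KF" using IF unfolding KF_def by auto
      then have "a \<le> card (X \<inter> Y)" by (rule amin)
      then show False using cI by simp
    qed
  qed
  obtain a0 where a0: "a0 \<in> A0" using A0 unfolding KF_def F_def by auto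
  have A0c: "A0 \<subseteq> carrier G" using A0 unfolding KF_def F_def by auto
  have a0c: "a0 \<in> carrier G" using a0 A0c by auto
  define H where "H = A0 #> inv a0"
  have HKF: "H \<in> KF" "card H = a" unfolding H_def using trans[OF A0(1)] a0c A0 by auto
  have Hc: "H \<subseteq> carrier G" using HKF unfolding KF_def F_def by auto
  have oneH: "\<one> \<in> H" unfolding H_def r_coset_def using a0 a0c by force
  have closed: "H #> inv x = H" if "x \<in> H" for x
  proof -
    have xc: "x \<in> carrier G" using that Hc by auto
    have T: "H #> inv x \<in> KF" "card (H #> inv x) = a" using trans[OF HKF(1)] xc HKF by auto
    have "\<one> \<in> H #> inv x" unfolding r_coset_def using that xc by force
    then have "(H #> inv x) \<inter> H \<noteq> {}" using oneH by auto
    then show ?thesis using inter[OF T(1) HKF(1) T(2) HKF(2)] by auto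
  qed
  have invH: "inv x \<in> H" if "x \<in> H" for x
  proof -
    have xc: "x \<in> carrier G" using that Hc by auto
    have "\<one> \<otimes> inv x \<in> H #> inv x" unfolding r_coset_def using oneH by auto
    then show ?thesis using closed[OF that] xc by simp
  qed
  have sgH: "subgroup H G"
  proof (rule subgroupI)
    show "H \<subseteq> carrier G" by (rule Hc)
    show "H \<noteq> {}" using oneH by auto
    show "inv x \<in> H" if "x \<in> H" for x using invH that .
    show "x \<otimes> y \<in> H" if "x \<in> H" "y \<in> H" for x y
    proof -
      have yc: "y \<in> carrier G" using that Hc by auto
      have "x \<otimes> inv (inv y) \<in> H #> inv (inv y)" unfolding r_coset_def using that by auto
      then show ?thesis using closed[OF invH[OF that(2)]] yc by simp
    qed
  qed
  have HF: "H <#> B \<noteq> carrier G" using HKF unfolding KF_def F_def by auto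
  have kH: "card (H <#> B) - card H = k" using KF_card[OF HKF(1)] by simp
  show ?thesis
  proof (intro exI[of _ H] conjI allI impI)
    show "subgroup H G" by (rule sgH)
    show "H <#> B \<noteq> carrier G" by (rule HF)
    fix X assume "X \<subseteq> carrier G" "X \<noteq> {}" "X <#> B \<noteq> carrier G"
    then have "X \<in> F" unfolding F_def by auto
    then show "card X + (card (H <#> B) - card H) \<le> card (X <#> B)" using low kH by simp
  qed
qed

end


lemma diam_ge: "enat r \<le> diam G A \<longleftrightarrow> (\<forall>k<r. sumset G A k \<noteq> carrier G)"
proof (cases "\<exists>r. sumset G A r = carrier G")
  case True
  define L where "L = (LEAST r. sumset G A r = carrier G)"
  have L: "sumset G A L = carrier G" unfolding L_def using LeastI_ex[OF True] .
  have Lmin: "L \<le> k" if "sumset G A k = carrier G" for k unfolding L_def using that by (rule Least_le)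
  have d: "diam G A = enat L" unfolding diam_def L_def using True by simp
  have "r \<le> L \<longleftrightarrow> (\<forall>k<r. sumset G A k \<noteq> carrier G)"
  proof
    assume "r \<le> L"
    then show "\<forall>k<r. sumset G A k \<noteq> carrier G" using Lmin by fastforce
  next
    assume "\<forall>k<r. sumset G A k \<noteq> carrier G"
    then show "r \<le> L" using L by (cases "L < r") auto
  qed
  then show ?thesis unfolding d by simp
next
  case False
  then show ?thesis unfolding diam_def by simp
qed

lemma diam_fin: "diam G A < \<infinity> \<longleftrightarrow> (\<exists>k. sumset G A k = carrier G)"
  unfolding diam_def by simp

context comm_group
begin

lemma sumset_carrier: "A \<subseteq> carrier G \<Longrightarrow> sumset G A n \<subseteq> carrier G"
proof (induction n)
  case 0 then show ?case by simp
next
  case (Suc n) then show ?case by (simp add: set_mult_closed)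
qed

lemma sumset_Suc_sup: "A \<subseteq> carrier G \<Longrightarrow> sumset G A n \<subseteq> sumset G A (Suc n)"
proof
  fix x assume A: "A \<subseteq> carrier G" and x: "x \<in> sumset G A n"
  then have "x \<in> carrier G" using sumset_carrier by auto
  then have "x = x \<otimes> \<one>" by simp
  moreover have "x \<otimes> \<one> \<in> sumset G A n <#> (A \<union> {\<one>})" using x unfolding set_mult_def by blast
  ultimately show "x \<in> sumset G A (Suc n)" by simp
qed

lemma sumset_mono: "A \<subseteq> carrier G \<Longrightarrow> i \<le> j \<Longrightarrow> sumset G A i \<subseteq> sumset G A j"
proof -
  assume A: "A \<subseteq> carrier G" and ij: "i \<le> j"
  show ?thesis by (rule lift_Suc_mono_le[of "sumset G A", OF sumset_Suc_sup[OF A] ij])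
qed

lemma sumset_one: "A \<subseteq> carrier G \<Longrightarrow> sumset G A 1 = A \<union> {\<one>}"
proof -
  assume A: "A \<subseteq> carrier G"
  have "sumset G A 1 = {\<one>} <#> (A \<union> {\<one>})" by (simp add: One_nat_def)
  also have "\<dots> = A \<union> {\<one>}" using A by (intro one_set_mult) auto
  finally show ?thesis .
qed

lemma sumset_gen: "A \<subseteq> carrier G \<Longrightarrow> sumset G A n \<subseteq> generate G A"
proof (induction n)
  case 0 then show ?case by (simp add: generate.one)
next
  case (Suc n)
  show ?case
  proof
    fix x assume "x \<in> sumset G A (Suc n)"
    then obtain s b where "s \<in> sumset G A n" "b \<in> A \<union> {\<one>}" "x = s \<otimes> b"
      unfolding sumset.simps set_mult_def by auto
    moreover have "b \<in> generate G A" using \<open>b \<in> A \<union> {\<one>}\<close> generate.one generate.incl by auto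
    moreover have "s \<in> generate G A" using Suc \<open>s \<in> sumset G A n\<close> by auto
    ultimately show "x \<in> generate G A" using generate.eng[of s G A b] by simp
  qed
qed

lemma sumset_add:
  assumes "A \<subseteq> carrier G" "x \<in> sumset G A i"
  shows "y \<in> sumset G A j \<Longrightarrow> x \<otimes> y \<in> sumset G A (i + j)"
proof (induction j arbitrary: y)
  case 0
  have "x \<in> carrier G" using assms sumset_carrier by blast
  moreover have "y = \<one>" using 0 by simp
  ultimately show ?case using assms(2) by simp
next
  case (Suc j)
  then obtain s b where sb: "s \<in> sumset G A j" "b \<in> A \<union> {\<one>}" "y = s \<otimes> b"
    unfolding sumset.simps set_mult_def by auto
  have c: "x \<in> carrier G" "s \<in> carrier G" "b \<in> carrier G"
    using assms sb sumset_carrier by auto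
  have "x \<otimes> y = (x \<otimes> s) \<otimes> b" using sb c by (simp add: m_assoc)
  moreover have "x \<otimes> s \<in> sumset G A (i + j)" using Suc sb by auto
  ultimately have "x \<otimes> y \<in> sumset G A (i + j) <#> (A \<union> {\<one>})"
    using sb unfolding set_mult_def by blast
  then show ?case by simp
qed

lemma sumset_pow:
  assumes "A \<subseteq> carrier G" "x \<in> sumset G A i"
  shows "x [^] m \<in> sumset G A (m * i)"
proof (induction m)
  case 0 then show ?case by simp
next
  case (Suc m)
  have "x [^] Suc m = x [^] m \<otimes> x" by (simp add: nat_pow_Suc)
  then show ?case using sumset_add[OF assms(1) Suc assms(2)] by (simp add: add.commute)
qed

lemma gen_fin:
  assumes fin: "finite (carrier G)" and Ac: "A \<subseteq> carrier G" and gen: "generate G A = carrier G"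
  shows "\<exists>k. sumset G A k = carrier G"
proof -
  define U where "U = (\<Union>k. sumset G A k)"
  have Uc: "U \<subseteq> carrier G" unfolding U_def using sumset_carrier Ac by auto
  have sgU: "subgroup U G"
  proof (rule subgroupI)
    show "U \<subseteq> carrier G" by (rule Uc)
    show "U \<noteq> {}" proof -
      have "\<one> \<in> sumset G A 0" by simp
      then show ?thesis unfolding U_def by blast
    qed
    show "x \<otimes> y \<in> U" if "x \<in> U" "y \<in> U" for x y
      using that sumset_add[OF Ac] unfolding U_def by blast
    show "inv x \<in> U" if "x \<in> U" for x
    proof -
      from \<open>x \<in> U\<close> obtain i where i: "x \<in> sumset G A i" unfolding U_def by blast
      have xc: "x \<in> carrier G" using that Uc by auto
      have "order G \<noteq> 0" using fin xc unfolding order_def by (auto simp: card_0_eq)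
      then obtain m where m: "order G = Suc m" using not0_implies_Suc by blast
      have "x [^] m \<otimes> x = \<one>" using pow_order_eq_1[OF xc] m by (simp add: nat_pow_Suc)
      then have "inv x = x [^] m" using xc by (simp add: inv_equality)
      then show ?thesis using sumset_pow[OF Ac i] unfolding U_def by auto
    qed
  qed
  have "A \<subseteq> U" unfolding U_def using sumset_one[OF Ac] by blast
  then have "carrier G \<subseteq> U" using generate_subgroup_incl[OF _ sgU] gen by auto
  define f where "f x = (SOME k. x \<in> sumset G A k)" for x
  have f: "x \<in> sumset G A (f x)" if "x \<in> carrier G" for x
  proof -
    have "\<exists>k. x \<in> sumset G A k" using that \<open>carrier G \<subseteq> U\<close> unfolding U_def by blast
    then show ?thesis unfolding f_def by (rule someI_ex)
  qed
  define K where "K = Max (f ` carrier G)"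
  have "sumset G A (f x) \<subseteq> sumset G A K" if "x \<in> carrier G" for x
    using sumset_mono[OF Ac] fin that unfolding K_def by auto
  then have "carrier G \<subseteq> sumset G A K" using f by blast
  then show ?thesis using sumset_carrier[OF Ac] by blast
qed

end


context comm_group
begin

lemma kappa_half:
  assumes fin: "finite (carrier G)" and Bc: "B \<subseteq> carrier G" and B1: "\<one> \<in> B"
    and sgH: "subgroup H G" and HB: "H <#> B \<noteq> carrier G" and gen: "generate G B = carrier G"
  shows "card B \<le> 2 * (card (H <#> B) - card H) \<and>
    (card B = 2 * (card (H <#> B) - card H) \<longrightarrow>
       (\<exists>g\<in>B. g \<notin> H \<and> B = H \<union> (H #> g) \<and> card B = 2 * card H))"
proof -
  have Hc: "H \<subseteq> carrier G" using sgH by (rule subgroup.subset)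
  have one_H: "\<one> \<in> H" using sgH by (rule subgroup.one_closed)
  have HBc: "H <#> B \<subseteq> carrier G" using set_mult_closed[OF Hc Bc] .
  have finHB: "finite (H <#> B)" using finite_subset[OF HBc fin] .
  have sub1: "H \<subseteq> H <#> B" using set_mult_sup[OF Hc B1] .
  obtain g where g: "g \<in> B" "g \<notin> H"
  proof (rule ccontr)
    assume "\<not> thesis"
    then have "B \<subseteq> H" using that by blast
    then have "generate G B \<subseteq> H" using generate_subgroup_incl[OF _ sgH] by blast
    then have "carrier G \<subseteq> H <#> B" using gen sub1 by blast
    then show False using HB HBc by blast
  qed
  have gc: "g \<in> carrier G" using g Bc by auto
  have sub2: "H #> g \<subseteq> H <#> B" unfolding r_coset_def set_mult_def using g by blast
  have disj: "H \<inter> (H #> g) = {}"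
  proof (rule ccontr)
    assume "H \<inter> (H #> g) \<noteq> {}"
    then obtain x h where xh: "x \<in> H" "h \<in> H" "x = h \<otimes> g" unfolding r_coset_def by blast
    have hc: "h \<in> carrier G" using xh Hc by auto
    have "inv h \<otimes> x = (inv h \<otimes> h) \<otimes> g" using xh hc gc by (simp only: m_assoc inv_closed)
    also have "\<dots> = g" using hc gc by simp
    finally have "inv h \<otimes> x = g" .
    moreover have "inv h \<otimes> x \<in> H" using xh sgH by (simp add: subgroup.m_closed subgroup.m_inv_closed)
    ultimately show False using g by simp
  qed
  have finH: "finite H" using finite_subset[OF Hc fin] .
  have cU: "card (H \<union> (H #> g)) = 2 * card H"
  proof -
    have "finite (H #> g)" using finite_subset[OF r_coset_subset_G[OF Hc gc] fin] .
    then have "card (H \<union> (H #> g)) = card H + card (H #> g)"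
      using card_Un_disjoint[OF finH] disj by simp
    then show ?thesis using card_rcoset[OF Hc gc] by simp
  qed
  have cHB: "2 * card H \<le> card (H <#> B)"
    using card_mono[OF finHB, of "H \<union> (H #> g)"] sub1 sub2 cU by simp
  have subB: "B \<subseteq> H <#> B"
  proof
    fix b assume "b \<in> B"
    then have "b = \<one> \<otimes> b" using Bc by auto
    then show "b \<in> H <#> B" using \<open>b \<in> B\<close> one_H unfolding set_mult_def by blast
  qed
  have cB: "card B \<le> card (H <#> B)" using card_mono[OF finHB subB] .
  show ?thesis
  proof (intro conjI impI)
    show "card B \<le> 2 * (card (H <#> B) - card H)" using cHB cB by linarith
    assume eq: "card B = 2 * (card (H <#> B) - card H)"
    then have e1: "card (H <#> B) = 2 * card H" and e2: "card B = card (H <#> B)"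
      using cHB cB by linarith+
    have BHB: "B = H <#> B" using card_subset_eq[OF finHB subB e2] .
    have UHB: "H \<union> (H #> g) = H <#> B"
    proof -
      have s: "H \<union> (H #> g) \<subseteq> H <#> B" using sub1 sub2 by blast
      have "card (H \<union> (H #> g)) = card (H <#> B)" using cU e1 by simp
      then show ?thesis using card_subset_eq[OF finHB s] by simp
    qed
    have BU: "B = H \<union> (H #> g)" using BHB UHB by simp
    have cBH: "card B = 2 * card H" using e1 e2 by simp
    show "\<exists>g\<in>B. g \<notin> H \<and> B = H \<union> (H #> g) \<and> card B = 2 * card H"
      using g BU cBH by blast
  qed
qed

lemma core:
  assumes fin: "finite (carrier G)" and Ac: "A \<subseteq> carrier G" and gen: "generate G A = carrier G"
    and N: "N = Suc (Suc (Suc M))" and SN: "sumset G A N \<noteq> carrier G"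
  shows "(N + 2) * card A \<le> 2 * card (carrier G) \<and>
    ((N + 2) * card A = 2 * card (carrier G) \<longrightarrow>
      (\<exists>H g. subgroup H G \<and> g \<in> carrier G \<and> g \<notin> H \<and> A = H \<union> (H #> g)
         \<and> card (carrier G) = (N + 2) * card H))"
proof -
  define n where "n = card (carrier G)"
  define B where "B = A \<union> {\<one>}"
  have Bc: "B \<subseteq> carrier G" using Ac unfolding B_def by auto
  have B1: "\<one> \<in> B" unfolding B_def by auto
  have finB: "finite B" using finite_subset[OF Bc fin] .
  have genB: "generate G B = carrier G"
    using mono_generate[of A B] generate_incl[OF Bc] gen unfolding B_def by auto
  define S where "S k = sumset G A k" for k
  have SSuc: "S (Suc k) = S k <#> B" for k unfolding S_def B_def by simp
  have Sc: "S k \<subseteq> carrier G" for k unfolding S_def using sumset_carrier[OF Ac] .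
  have Sne: "S k \<noteq> carrier G" if "k \<le> N" for k
  proof
    assume "S k = carrier G"
    then have "carrier G \<subseteq> S N" unfolding S_def using sumset_mono[OF Ac that] by auto
    then show False using SN Sc unfolding S_def by blast
  qed
  have S1: "S 1 = B" unfolding S_def B_def using sumset_one[OF Ac] .
  have one_S: "\<one> \<in> S k" for k
    using sumset_mono[OF Ac, of 0 k] unfolding S_def by auto
  have Bne: "B \<noteq> carrier G" using Sne[of 1] S1 N by auto
  obtain H where sgH: "subgroup H G" and HB: "H <#> B \<noteq> carrier G"
    and low: "\<And>X. X \<subseteq> carrier G \<Longrightarrow> X \<noteq> {} \<Longrightarrow> X <#> B \<noteq> carrier G \<Longrightarrow>
        card X + (card (H <#> B) - card H) \<le> card (X <#> B)"
    using atom_subgroup[OF fin Bc B1 Bne] by blast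
  define k where "k = card (H <#> B) - card H"
  have growth: "card B + j * k \<le> card (S (Suc j))" if "Suc j \<le> N" for j
    using that
  proof (induction j)
    case 0 then show ?case using S1 by simp
  next
    case (Suc j)
    have IH: "card B + j * k \<le> card (S (Suc j))" using Suc by simp
    have "card (S (Suc j)) + k \<le> card (S (Suc j) <#> B)"
      unfolding k_def
    proof (rule low)
      show "S (Suc j) \<subseteq> carrier G" by (rule Sc)
      show "S (Suc j) \<noteq> {}" using one_S by auto
      show "S (Suc j) <#> B \<noteq> carrier G" using Sne[of "Suc (Suc j)"] Suc.prems SSuc by simp
    qed
    then show ?case using IH SSuc by simp
  qed
  have compl: "card (S (N - 1)) + card B \<le> n"
  proof -
    obtain x where x: "x \<in> carrier G" "x \<notin> S N" using SN Sc unfolding S_def by blast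
    define T where "T = (\<lambda>b. x \<otimes> inv b) ` B"
    have inj: "inj_on (\<lambda>b. x \<otimes> inv b) B"
    proof (rule inj_onI)
      fix b1 b2 assume b: "b1 \<in> B" "b2 \<in> B" "x \<otimes> inv b1 = x \<otimes> inv b2"
      have c: "b1 \<in> carrier G" "b2 \<in> carrier G" using b Bc by auto
      have "inv b1 = inv b2" using b(3) x c by simp
      then show "b1 = b2" using inj_onD[OF inv_inj _ c] by simp
    qed
    have cT: "card T = card B" unfolding T_def using card_image[OF inj] .
    have Tc: "T \<subseteq> carrier G" unfolding T_def using x Bc by auto
    have disj: "S (N - 1) \<inter> T = {}"
    proof (rule ccontr)
      assume "S (N - 1) \<inter> T \<noteq> {}"
      then obtain b where b: "b \<in> B" "x \<otimes> inv b \<in> S (N - 1)" unfolding T_def by blast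
      have bc: "b \<in> carrier G" using b Bc by auto
      have "(x \<otimes> inv b) \<otimes> b = x" using x bc by (simp add: m_assoc)
      moreover have "(x \<otimes> inv b) \<otimes> b \<in> S (N - 1) <#> B" using b unfolding set_mult_def by blast
      moreover have "S (N - 1) <#> B = S N" using SSuc[of "N - 1"] N by simp
      ultimately show False using x by simp
    qed
    have "card (S (N - 1) \<union> T) = card (S (N - 1)) + card T"
      using card_Un_disjoint[OF finite_subset[OF Sc fin] finite_subset[OF Tc fin] disj] .
    moreover have "card (S (N - 1) \<union> T) \<le> n"
      unfolding n_def by (rule card_mono[OF fin]) (use Sc Tc in auto)
    ultimately show ?thesis using cT by simp
  qed
  have g2: "card B + Suc M * k \<le> card (S (N - 1))" using growth[of "Suc M"] N by simp
  have kh: "card B \<le> 2 * k \<and> (card B = 2 * k \<longrightarrow>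
       (\<exists>g\<in>B. g \<notin> H \<and> B = H \<union> (H #> g) \<and> card B = 2 * card H))"
    unfolding k_def using kappa_half[OF fin Bc B1 sgH HB genB] .
  have main: "4 * card B + Suc M * (2 * k) \<le> 2 * n" using compl g2 by simp
  have m2: "Suc M * card B \<le> Suc M * (2 * k)" using kh by (intro mult_le_mono2) simp
  have AB: "card A \<le> card B" using card_mono[OF finB] unfolding B_def by auto
  have idt: "(N + 2) * x = 4 * x + Suc M * x" for x :: nat using N by (simp add: algebra_simps)
  have bound: "(N + 2) * card B \<le> 2 * n" using main m2 idt[of "card B"] by linarith
  have boundA: "(N + 2) * card A \<le> (N + 2) * card B" using AB by (rule mult_le_mono2)
  show ?thesis
  proof (intro conjI impI)
    show "(N + 2) * card A \<le> 2 * card (carrier G)" using bound boundA n_def by linarith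
    assume eq: "(N + 2) * card A = 2 * card (carrier G)"
    then have "(N + 2) * card B \<le> (N + 2) * card A" using bound n_def by linarith
    then have "card B \<le> card A" using mult_le_cancel1[of "N + 2" "card B" "card A"] by simp
    then have cAB: "card A = card B" using AB by simp
    have eqB: "(N + 2) * card B = 2 * n" using eq cAB n_def by simp
    have "Suc M * (2 * k) \<le> Suc M * card B"
      using main eqB idt[of "card B"] by linarith
    then have "2 * k \<le> card B" by (rule mult_le_cancel1[THEN iffD1, rule_format]) simp
    then have "card B = 2 * k" using kh by simp
    then obtain g where g: "g \<in> B" "g \<notin> H" "B = H \<union> (H #> g)" "card B = 2 * card H"
      using kh by blast
    have "A = B" using card_subset_eq[OF finB _ cAB] unfolding B_def by auto
    moreover have "g \<in> carrier G" using g Bc by auto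
    moreover have "card (carrier G) = (N + 2) * card H"
    proof -
      have "2 * card (carrier G) = 2 * ((N + 2) * card H)" using eq cAB g(4) by simp
      then show ?thesis by simp
    qed
    ultimately show "\<exists>H g. subgroup H G \<and> g \<in> carrier G \<and> g \<notin> H \<and> A = H \<union> (H #> g)
         \<and> card (carrier G) = (N + 2) * card H" using sgH g by blast
  qed
qed

end


context comm_group
begin

lemma order_Mod: "order (G Mod H) = card (rcosets H)"
  unfolding order_def FactGroup_def by simp

lemma order_Mod_mult:
  assumes "subgroup H G" shows "order (G Mod H) * card H = card (carrier G)"
  using lagrange[OF assms] order_Mod unfolding order_def by simp

lemma Mod_hom:
  assumes sgH: "subgroup H G"
  shows "group_hom G (G Mod H) (\<lambda>a. H #> a)"
proof -
  have nH: "H \<lhd> G" using subgroup_imp_normal[OF sgH] .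
  show ?thesis
  proof (rule group_hom.intro)
    show "group G" by (rule is_group)
    show "group (G Mod H)" by (rule normal.factorgroup_is_group[OF nH])
    show "group_hom_axioms G (G Mod H) (\<lambda>a. H #> a)"
      by (rule group_hom_axioms.intro) (rule normal.r_coset_hom_Mod[OF nH])
  qed
qed

lemma quot_gen_iff:
  assumes sgH: "subgroup H G" and gc: "g \<in> carrier G"
  shows "generate (G Mod H) {H #> g} = carrier (G Mod H) \<longleftrightarrow>
         generate G (H \<union> (H #> g)) = carrier G"
proof -
  define f where "f = (\<lambda>a. H #> a)"
  have hom: "group_hom G (G Mod H) f" unfolding f_def using Mod_hom[OF sgH] .
  have Hc: "H \<subseteq> carrier G" using sgH by (rule subgroup.subset)
  have img: "generate (G Mod H) {H #> g} = f ` generate G {g}"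
    using group_hom.generate_img[OF hom, of "{g}"] gc unfolding f_def by simp
  have cM: "carrier (G Mod H) = f ` carrier G" unfolding f_def by (rule carrier_FactGroup)
  have gA: "g \<in> H #> g" using rcos_self[OF gc sgH] .
  show ?thesis
  proof
    assume gq: "generate (G Mod H) {H #> g} = carrier (G Mod H)"
    define A where "A = H \<union> (H #> g)"
    have Ac: "A \<subseteq> carrier G" unfolding A_def using Hc r_coset_subset_G[OF Hc gc] by auto
    have "carrier G \<subseteq> generate G A"
    proof
      fix x assume xc: "x \<in> carrier G"
      then have "f x \<in> carrier (G Mod H)" using cM by auto
      then have "f x \<in> f ` generate G {g}" using gq img by simp
      then obtain y where y: "y \<in> generate G {g}" "f x = f y" by blast
      have yc: "y \<in> carrier G" using generate_incl[of "{g}"] gc y by auto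
      have "x \<in> H #> y" using y(2) rcos_self[OF xc sgH] unfolding f_def by simp
      then obtain h where h: "h \<in> H" "x = h \<otimes> y" unfolding r_coset_def by auto
      have hA: "h \<in> generate G A" using h generate.incl[of h A G] unfolding A_def by auto
      have yA: "y \<in> generate G A"
        using mono_generate[of "{g}" A] y gA unfolding A_def by auto
      show "x \<in> generate G A" using generate.eng[OF hA yA] h(2) by simp
    qed
    then show "generate G (H \<union> (H #> g)) = carrier G"
      using generate_incl[OF Ac] unfolding A_def by auto
  next
    assume gG: "generate G (H \<union> (H #> g)) = carrier G"
    define Q where "Q = f ` generate G {g}"
    have sgQ: "subgroup Q (G Mod H)" unfolding Q_def
      using group_hom.subgroup_img_is_subgroup[OF hom generate_is_subgroup] gc by auto
    define W where "W = {x \<in> carrier G. f x \<in> Q}"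
    have sgW: "subgroup W G"
    proof (rule subgroupI)
      show "W \<subseteq> carrier G" unfolding W_def by auto
      have "f \<one> \<in> Q" using group_hom.hom_one[OF hom] subgroup.one_closed[OF sgQ] by simp
      then show "W \<noteq> {}" unfolding W_def by auto
      show "inv x \<in> W" if "x \<in> W" for x
        using that group_hom.hom_inv[OF hom] subgroup.m_inv_closed[OF sgQ] unfolding W_def by auto
      show "x \<otimes> y \<in> W" if "x \<in> W" "y \<in> W" for x y
        using that group_hom.hom_mult[OF hom] subgroup.m_closed[OF sgQ] unfolding W_def by auto
    qed
    have HW: "H \<union> (H #> g) \<subseteq> W"
    proof
      fix x assume x: "x \<in> H \<union> (H #> g)"
      have fg: "f g \<in> Q" unfolding Q_def using generate.incl[of g "{g}" G] by auto
      show "x \<in> W"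
      proof (cases "x \<in> H")
        case True
        then have "f x = H" unfolding f_def using subgroup.rcos_const[OF sgH is_group] by simp
        then have "f x \<in> Q" using subgroup.one_closed[OF sgQ] by simp
        then show ?thesis unfolding W_def using True Hc by auto
      next
        case False
        then have xg: "x \<in> H #> g" using x by auto
        then have "f x = f g" unfolding f_def using repr_independence[OF xg gc sgH] by simp
        moreover have "x \<in> carrier G" using xg r_coset_subset_G[OF Hc gc] by auto
        ultimately show ?thesis unfolding W_def using fg by auto
      qed
    qed
    have "carrier G \<subseteq> W" using generate_subgroup_incl[OF HW sgW] gG by simp
    then have "carrier (G Mod H) \<subseteq> Q" using cM unfolding W_def by auto
    moreover have "Q \<subseteq> carrier (G Mod H)" using subgroup.subset[OF sgQ] .
    ultimately show "generate (G Mod H) {H #> g} = carrier (G Mod H)" using img Q_def by auto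
  qed
qed

lemma cyclic_of_gen:
  assumes grp: "group K" and x: "x \<in> carrier K" and gen: "generate K {x} = carrier K"
  shows "cyclic_group K"
proof -
  have i: "carrier K \<inter> {x} = {x}" using x by blast
  have gc: "generate K (carrier K) = carrier K"
  proof
    show "generate K (carrier K) \<subseteq> carrier K" using group.generate_incl[OF grp, of "carrier K"] by simp
    show "carrier K \<subseteq> generate K (carrier K)"
    proof
      fix y assume "y \<in> carrier K"
      then show "y \<in> generate K (carrier K)" by (rule generate.incl)
    qed
  qed
  have "subgroup_generated K {x} = K\<lparr>carrier := generate K (carrier K \<inter> {x})\<rparr>"
    by (simp only: subgroup_generated_def)
  also have "\<dots> = K\<lparr>carrier := generate K (carrier K \<inter> carrier K)\<rparr>"
    by (simp only: i gen Int_absorb gc)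
  also have "\<dots> = subgroup_generated K (carrier K)" by (simp only: subgroup_generated_def)
  also have "\<dots> = K" by (rule group.subgroup_generated_group_carrier[OF grp])
  finally have "subgroup_generated K {x} = K" .
  then show ?thesis unfolding cyclic_group_def using x by blast
qed

lemma cyclic_Mod_gen:
  assumes "cyclic_group (G Mod H)"
  shows "\<exists>g\<in>carrier G. generate (G Mod H) {H #> g} = carrier (G Mod H)"
proof -
  obtain x where x: "x \<in> carrier (G Mod H)" "subgroup_generated (G Mod H) {x} = G Mod H"
    using assms unfolding cyclic_group_def by blast
  have "carrier (subgroup_generated (G Mod H) {x}) = carrier (G Mod H)" using x(2) by simp
  moreover have "carrier (G Mod H) \<inter> {x} = {x}" using x(1) by blast
  ultimately have gx: "generate (G Mod H) {x} = carrier (G Mod H)"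
    unfolding carrier_subgroup_generated by simp
  from x(1) obtain g where "g \<in> carrier G" "x = H #> g" unfolding carrier_FactGroup by blast
  then show ?thesis using gx by blast
qed

lemma sumset_cosets:
  assumes sgH: "subgroup H G" and gc: "g \<in> carrier G"
  shows "sumset G (H \<union> (H #> g)) k \<subseteq> (\<Union>j\<le>k. H #> (g [^] j))"
proof (induction k)
  case 0
  have "\<one> \<in> H #> (g [^] (0::nat))" using rcos_self[OF one_closed sgH] by simp
  then show ?case by auto
next
  case (Suc k)
  have Hc: "H \<subseteq> carrier G" using sgH by (rule subgroup.subset)
  show ?case
  proof
    fix x assume "x \<in> sumset G (H \<union> (H #> g)) (Suc k)"
    then obtain s a where sa: "s \<in> sumset G (H \<union> (H #> g)) k" "a \<in> H \<union> (H #> g) \<union> {\<one>}" "x = s \<otimes> a"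
      unfolding sumset.simps set_mult_def by auto
    from sa(1) Suc obtain j h where jh: "j \<le> k" "h \<in> H" "s = h \<otimes> g [^] j"
      unfolding r_coset_def by blast
    have hc: "h \<in> carrier G" using jh Hc by auto
    have mem: "y \<otimes> g [^] i \<in> (\<Union>j\<le>Suc k. H #> (g [^] j))" if "y \<in> H" "i \<le> Suc k" for y i
    proof -
      have "y \<otimes> g [^] i \<in> H #> (g [^] i)" unfolding r_coset_def using that(1) by blast
      then show ?thesis using that(2) by blast
    qed
    consider "a = \<one>" | "a \<in> H" | h' where "h' \<in> H" "a = h' \<otimes> g"
      using sa(2) unfolding r_coset_def by blast
    then show "x \<in> (\<Union>j\<le>Suc k. H #> (g [^] j))"
    proof cases
      case 1
      then have "x = h \<otimes> g [^] j" using sa jh hc gc by simp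
      then show ?thesis using mem[OF jh(2)] jh(1) by simp
    next
      case 2
      have ac: "a \<in> carrier G" using 2 Hc by auto
      have "x = (h \<otimes> a) \<otimes> g [^] j" using sa jh hc gc ac by (simp add: m_ac)
      moreover have "h \<otimes> a \<in> H" using 2 jh sgH by (simp add: subgroup.m_closed)
      ultimately show ?thesis using mem[of "h \<otimes> a" j] jh(1) by simp
    next
      case 3
      have ac: "h' \<in> carrier G" using 3 Hc by auto
      have "x = (h \<otimes> h') \<otimes> g [^] Suc j" using sa jh hc gc ac 3 by (simp add: m_ac nat_pow_Suc)
      moreover have "h \<otimes> h' \<in> H" using 3 jh sgH by (simp add: subgroup.m_closed)
      moreover have "Suc j \<le> Suc k" using jh by simp
      ultimately show ?thesis using mem[of "h \<otimes> h'" "Suc j"] by simp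
    qed
  qed
qed

lemma card_sumset_cosets:
  assumes fin: "finite (carrier G)" and sgH: "subgroup H G" and gc: "g \<in> carrier G"
  shows "card (sumset G (H \<union> (H #> g)) k) \<le> Suc k * card H"
proof -
  have Hc: "H \<subseteq> carrier G" using sgH by (rule subgroup.subset)
  have "finite (H #> (g [^] j))" for j::nat
    using finite_subset[OF r_coset_subset_G[OF Hc nat_pow_closed[OF gc]] fin] .
  then have fU: "finite (\<Union>j\<le>k. H #> (g [^] j))" by simp
  have "card (sumset G (H \<union> (H #> g)) k) \<le> card (\<Union>j\<le>k. H #> (g [^] j))"
    by (rule card_mono[OF fU sumset_cosets[OF sgH gc]])
  also have "\<dots> \<le> (\<Sum>j\<le>k. card (H #> (g [^] j)))" by (rule card_UN_le) simp
  also have "\<dots> = (\<Sum>j\<le>k. card H)" using card_rcoset[OF Hc] gc by simp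
  also have "\<dots> = Suc k * card H" by simp
  finally show ?thesis .
qed

end


lemma (in comm_group) coset_disj:
  assumes sgH: "subgroup H G" and gc: "g \<in> carrier G" and g: "g \<notin> H"
  shows "H \<inter> (H #> g) = {}"
proof (rule ccontr)
  have Hc: "H \<subseteq> carrier G" using sgH by (rule subgroup.subset)
  assume "H \<inter> (H #> g) \<noteq> {}"
  then obtain x h where xh: "x \<in> H" "h \<in> H" "x = h \<otimes> g" unfolding r_coset_def by blast
  have hc: "h \<in> carrier G" using xh Hc by auto
  have "inv h \<otimes> x = (inv h \<otimes> h) \<otimes> g" using xh hc gc by (simp only: m_assoc inv_closed)
  also have "\<dots> = g" using hc gc by simp
  finally have "inv h \<otimes> x = g" .
  moreover have "inv h \<otimes> x \<in> H" using xh sgH by (simp add: subgroup.m_closed subgroup.m_inv_closed)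
  ultimately show False using g by simp
qed

lemma real_eq_iff:
  "real a = 2 / (real r + 1) * real n \<longleftrightarrow> (r + 1) * a = 2 * (n::nat)"
proof -
  have "real a = 2 / (real r + 1) * real n \<longleftrightarrow> real a * (real r + 1) = 2 * real n"
    by (simp add: field_simps)
  also have "\<dots> \<longleftrightarrow> real ((r + 1) * a) = real (2 * n)" by (simp add: algebra_simps)
  also have "\<dots> \<longleftrightarrow> (r + 1) * a = 2 * n" by (rule of_nat_eq_iff)
  finally show ?thesis .
qed

lemma real_le_iff:
  "real a \<le> 2 / (real r + 1) * real n \<longleftrightarrow> (r + 1) * a \<le> 2 * (n::nat)"
proof -
  have "real a \<le> 2 / (real r + 1) * real n \<longleftrightarrow> real a * (real r + 1) \<le> 2 * real n"
    by (simp add: field_simps)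
  also have "\<dots> \<longleftrightarrow> real ((r + 1) * a) \<le> real (2 * n)" by (simp add: algebra_simps)
  also have "\<dots> \<longleftrightarrow> (r + 1) * a \<le> 2 * n" by (rule of_nat_le_iff)
  finally show ?thesis .
qed

theorem theorem2p9:
  fixes G :: "('a, 'b) monoid_scheme" and r :: nat
  assumes "comm_group G" and "finite (carrier G)" and "r \<ge> 4"
  shows "real (s_rho G r) \<le> 2 / (real r + 1) * real (card (carrier G))
    \<and> (real (s_rho G r) = 2 / (real r + 1) * real (card (carrier G)) \<longleftrightarrow>
         (\<exists>H. subgroup H G \<and> cyclic_group (G Mod H) \<and> order (G Mod H) = r + 1))
    \<and> (\<forall>A. A \<subseteq> carrier G \<longrightarrow>
         ((generate G A = carrier G \<and> enat r \<le> diam G A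
            \<and> real (card A) = 2 / (real r + 1) * real (card (carrier G)))
          \<longleftrightarrow>
          (\<exists>H g. subgroup H G \<and> cyclic_group (G Mod H) \<and> order (G Mod H) = r + 1
              \<and> g \<in> carrier G \<and> generate (G Mod H) {H #>\<^bsub>G\<^esub> g} = carrier (G Mod H)
              \<and> A = H \<union> (H #>\<^bsub>G\<^esub> g))))"
proof -
  interpret comm_group G by fact
  note fin = assms(2)
  define n where "n = card (carrier G)"
  have npos: "0 < n" unfolding n_def using fin card_gt_0_iff by blast
  define M where "M = r - 4"
  have M: "r - 1 = Suc (Suc (Suc M))" using assms(3) unfolding M_def by arith
  have r1: "r - 1 + 2 = r + 1" using assms(3) by simp
  have key: "(r + 1) * card A \<le> 2 * n \<and> ((r + 1) * card A = 2 * n \<longrightarrow>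
      (\<exists>H g. subgroup H G \<and> g \<in> carrier G \<and> g \<notin> H \<and> A = H \<union> (H #>\<^bsub>G\<^esub> g) \<and> n = (r + 1) * card H))"
    if Ac: "A \<subseteq> carrier G" and gen: "generate G A = carrier G" and dr: "enat r \<le> diam G A" for A
  proof -
    have "sumset G A (r - 1) \<noteq> carrier G" using dr unfolding diam_ge using assms(3) by simp
    from core[OF fin Ac gen M this] show ?thesis unfolding r1 n_def by blast
  qed
  have gen_of_fin: "generate G A = carrier G"
    if Ac: "A \<subseteq> carrier G" and df: "diam G A < \<infinity>" for A
  proof -
    obtain k where "sumset G A k = carrier G" using df unfolding diam_fin by blast
    then have "carrier G \<subseteq> generate G A" using sumset_gen[OF Ac] by blast
    then show ?thesis using generate_incl[OF Ac] by blast
  qed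
  have toQ: "cyclic_group (G Mod H) \<and> order (G Mod H) = r + 1 \<and>
      generate (G Mod H) {H #>\<^bsub>G\<^esub> g} = carrier (G Mod H)"
    if sgH: "subgroup H G" and gc: "g \<in> carrier G" and gen: "generate G (H \<union> (H #>\<^bsub>G\<^esub> g)) = carrier G"
      and nH: "n = (r + 1) * card H" for H g
  proof -
    have gq: "generate (G Mod H) {H #>\<^bsub>G\<^esub> g} = carrier (G Mod H)" using quot_gen_iff[OF sgH gc] gen by simp
    have grp: "group (G Mod H)" using normal.factorgroup_is_group[OF subgroup_imp_normal[OF sgH]] .
    have "H #>\<^bsub>G\<^esub> g \<in> carrier (G Mod H)" unfolding carrier_FactGroup using gc by blast
    then have cyc: "cyclic_group (G Mod H)" using cyclic_of_gen[OF grp _ gq] by blast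
    have "order (G Mod H) * card H = (r + 1) * card H" using order_Mod_mult[OF sgH] nH n_def by simp
    moreover have "card H > 0"
      using subgroup.one_closed[OF sgH] finite_subset[OF subgroup.subset[OF sgH] fin] card_gt_0_iff by blast
    ultimately have "order (G Mod H) = r + 1" by (simp only: mult_cancel2) simp
    then show ?thesis using gq cyc by blast
  qed
  have fromQ: "generate G A = carrier G \<and> enat r \<le> diam G A \<and> diam G A < \<infinity> \<and>
      (r + 1) * card A = 2 * n \<and> A \<subseteq> carrier G"
    if sgH: "subgroup H G" and ord: "order (G Mod H) = r + 1" and gc: "g \<in> carrier G"
      and gq: "generate (G Mod H) {H #>\<^bsub>G\<^esub> g} = carrier (G Mod H)" and A: "A = H \<union> (H #>\<^bsub>G\<^esub> g)" for H g A
  proof -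
    have Hc: "H \<subseteq> carrier G" using sgH by (rule subgroup.subset)
    have finH: "finite H" using finite_subset[OF Hc fin] .
    have gen: "generate G A = carrier G" using quot_gen_iff[OF sgH gc] gq A by simp
    have Ac: "A \<subseteq> carrier G" using A Hc r_coset_subset_G[OF Hc gc] by auto
    have nH: "n = (r + 1) * card H" using order_Mod_mult[OF sgH] ord n_def by simp
    have cHpos: "card H > 0" using subgroup.one_closed[OF sgH] finH card_gt_0_iff by blast
    have gH: "g \<notin> H"
    proof
      assume "g \<in> H"
      then have "H #>\<^bsub>G\<^esub> g = H" using subgroup.rcos_const[OF sgH is_group] by simp
      moreover have grp: "group (G Mod H)" using normal.factorgroup_is_group[OF subgroup_imp_normal[OF sgH]] .
      have "generate (G Mod H) {\<one>\<^bsub>G Mod H\<^esub>} = {\<one>\<^bsub>G Mod H\<^esub>}"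
        by (rule group.generate_one[OF grp])
      then have "generate (G Mod H) {H} = {H}" by (simp only: one_FactGroup)
      then have "carrier (G Mod H) = {H}" using gq \<open>H #>\<^bsub>G\<^esub> g = H\<close> by simp
      then have "order (G Mod H) = 1" unfolding order_def by simp
      then show False using ord assms(3) by simp
    qed
    have cA: "card A = 2 * card H"
    proof -
      have "finite (H #>\<^bsub>G\<^esub> g)" using finite_subset[OF r_coset_subset_G[OF Hc gc] fin] .
      then have "card (H \<union> (H #>\<^bsub>G\<^esub> g)) = card H + card (H #>\<^bsub>G\<^esub> g)"
        using card_Un_disjoint[OF finH] coset_disj[OF sgH gc gH] by simp
      then show ?thesis using card_rcoset[OF Hc gc] A by simp
    qed
    have dr: "enat r \<le> diam G A" unfolding diam_ge
    proof (intro allI impI)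
      fix k assume "k < r"
      have "card (sumset G A k) \<le> Suc k * card H" using card_sumset_cosets[OF fin sgH gc] A by simp
      also have "\<dots> < (r + 1) * card H" using \<open>k < r\<close> cHpos by simp
      finally have "card (sumset G A k) < n" using nH by simp
      then show "sumset G A k \<noteq> carrier G" using n_def by auto
    qed
    have df: "diam G A < \<infinity>" unfolding diam_fin using gen_fin[OF fin Ac gen] .
    have "(r + 1) * card A = 2 * n" using cA nH by simp
    then show ?thesis using gen dr df Ac by blast
  qed
  define Sset where "Sset = {card A | A. A \<subseteq> carrier G \<and> enat r \<le> diam G A \<and> diam G A < \<infinity>}"
  have sr: "s_rho G r = Max (Sset \<union> {0})" unfolding s_rho_def Sset_def by simp
  have finS: "finite (Sset \<union> {0})"
  proof -
    have "Sset \<subseteq> card ` Pow (carrier G)" unfolding Sset_def by blast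
    then show ?thesis using fin by (simp add: finite_subset)
  qed
  have smem: "s_rho G r \<in> Sset \<union> {0}" unfolding sr using finS by (intro Max_in) auto
  have sge: "x \<le> s_rho G r" if "x \<in> Sset" for x unfolding sr using finS that by simp
  have elem: "(r + 1) * x \<le> 2 * n \<and> ((r + 1) * x = 2 * n \<longrightarrow>
      (\<exists>H. subgroup H G \<and> cyclic_group (G Mod H) \<and> order (G Mod H) = r + 1))"
    if xS: "x \<in> Sset" for x
  proof -
    obtain A where A: "x = card A" "A \<subseteq> carrier G" "enat r \<le> diam G A" "diam G A < \<infinity>"
      using xS unfolding Sset_def by blast
    have gen: "generate G A = carrier G" using gen_of_fin A by blast
    have k: "(r + 1) * card A \<le> 2 * n \<and> ((r + 1) * card A = 2 * n \<longrightarrow>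
      (\<exists>H g. subgroup H G \<and> g \<in> carrier G \<and> g \<notin> H \<and> A = H \<union> (H #>\<^bsub>G\<^esub> g) \<and> n = (r + 1) * card H))"
      using key[OF A(2) gen A(3)] .
    show ?thesis
    proof (intro conjI impI)
      show "(r + 1) * x \<le> 2 * n" using k A by simp
      assume "(r + 1) * x = 2 * n"
      then obtain H g where Hg: "subgroup H G" "g \<in> carrier G" "A = H \<union> (H #>\<^bsub>G\<^esub> g)" "n = (r + 1) * card H"
        using k A by blast
      then show "\<exists>H. subgroup H G \<and> cyclic_group (G Mod H) \<and> order (G Mod H) = r + 1"
        using toQ[OF Hg(1,2) _ Hg(4)] gen by blast
    qed
  qed
  have bound: "(r + 1) * s_rho G r \<le> 2 * n"
    using smem elem by auto
  have part2: "real (s_rho G r) = 2 / (real r + 1) * real n \<longleftrightarrow>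
         (\<exists>H. subgroup H G \<and> cyclic_group (G Mod H) \<and> order (G Mod H) = r + 1)"
  proof
    assume "real (s_rho G r) = 2 / (real r + 1) * real n"
    then have eq: "(r + 1) * s_rho G r = 2 * n" by (simp only: real_eq_iff)
    then have "s_rho G r \<noteq> 0" using npos by (cases "s_rho G r = 0") auto
    then have "s_rho G r \<in> Sset" using smem by auto
    then show "\<exists>H. subgroup H G \<and> cyclic_group (G Mod H) \<and> order (G Mod H) = r + 1"
      using elem eq by blast
  next
    assume "\<exists>H. subgroup H G \<and> cyclic_group (G Mod H) \<and> order (G Mod H) = r + 1"
    then obtain H where H: "subgroup H G" "cyclic_group (G Mod H)" "order (G Mod H) = r + 1" by blast
    obtain g where g: "g \<in> carrier G" "generate (G Mod H) {H #>\<^bsub>G\<^esub> g} = carrier (G Mod H)"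
      using cyclic_Mod_gen[OF H(2)] by blast
    have Q: "generate G (H \<union> (H #>\<^bsub>G\<^esub> g)) = carrier G \<and> enat r \<le> diam G (H \<union> (H #>\<^bsub>G\<^esub> g)) \<and>
      diam G (H \<union> (H #>\<^bsub>G\<^esub> g)) < \<infinity> \<and> (r + 1) * card (H \<union> (H #>\<^bsub>G\<^esub> g)) = 2 * n \<and> H \<union> (H #>\<^bsub>G\<^esub> g) \<subseteq> carrier G"
      using fromQ[OF H(1) H(3) g refl] .
    then have "card (H \<union> (H #>\<^bsub>G\<^esub> g)) \<in> Sset" unfolding Sset_def by blast
    then have "card (H \<union> (H #>\<^bsub>G\<^esub> g)) \<le> s_rho G r" by (rule sge)
    then have "(r + 1) * card (H \<union> (H #>\<^bsub>G\<^esub> g)) \<le> (r + 1) * s_rho G r" by (rule mult_le_mono2)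
    then have "(r + 1) * s_rho G r = 2 * n" using Q bound by linarith
    then show "real (s_rho G r) = 2 / (real r + 1) * real n" by (simp only: real_eq_iff)
  qed
  have part3: "(generate G A = carrier G \<and> enat r \<le> diam G A
            \<and> real (card A) = 2 / (real r + 1) * real n)
          \<longleftrightarrow>
          (\<exists>H g. subgroup H G \<and> cyclic_group (G Mod H) \<and> order (G Mod H) = r + 1
              \<and> g \<in> carrier G \<and> generate (G Mod H) {H #>\<^bsub>G\<^esub> g} = carrier (G Mod H)
              \<and> A = H \<union> (H #>\<^bsub>G\<^esub> g))" if Ac: "A \<subseteq> carrier G" for A
  proof
    assume a: "generate G A = carrier G \<and> enat r \<le> diam G A \<and> real (card A) = 2 / (real r + 1) * real n"
    then have eq: "(r + 1) * card A = 2 * n" by (simp only: real_eq_iff)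
    obtain H g where Hg: "subgroup H G" "g \<in> carrier G" "A = H \<union> (H #>\<^bsub>G\<^esub> g)" "n = (r + 1) * card H"
      using key[OF Ac] a eq by blast
    have "generate G (H \<union> (H #>\<^bsub>G\<^esub> g)) = carrier G" using a Hg(3) by simp
    then show "\<exists>H g. subgroup H G \<and> cyclic_group (G Mod H) \<and> order (G Mod H) = r + 1
              \<and> g \<in> carrier G \<and> generate (G Mod H) {H #>\<^bsub>G\<^esub> g} = carrier (G Mod H)
              \<and> A = H \<union> (H #>\<^bsub>G\<^esub> g)"
      using toQ[OF Hg(1,2) _ Hg(4)] Hg by blast
  next
    assume "\<exists>H g. subgroup H G \<and> cyclic_group (G Mod H) \<and> order (G Mod H) = r + 1
              \<and> g \<in> carrier G \<and> generate (G Mod H) {H #>\<^bsub>G\<^esub> g} = carrier (G Mod H)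
              \<and> A = H \<union> (H #>\<^bsub>G\<^esub> g)"
    then obtain H g where Hg: "subgroup H G" "order (G Mod H) = r + 1" "g \<in> carrier G"
      "generate (G Mod H) {H #>\<^bsub>G\<^esub> g} = carrier (G Mod H)" "A = H \<union> (H #>\<^bsub>G\<^esub> g)" by blast
    have Q: "generate G A = carrier G \<and> enat r \<le> diam G A \<and> diam G A < \<infinity> \<and>
      (r + 1) * card A = 2 * n \<and> A \<subseteq> carrier G" using fromQ[OF Hg] .
    then have "real (card A) = 2 / (real r + 1) * real n" by (simp only: real_eq_iff)
    then show "generate G A = carrier G \<and> enat r \<le> diam G A
            \<and> real (card A) = 2 / (real r + 1) * real n" using Q by blast
  qed
  have part1: "real (s_rho G r) \<le> 2 / (real r + 1) * real n" using bound by (simp only: real_le_iff)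
  show ?thesis using part1 part2 part3 unfolding n_def by blast
qed


end
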